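(* Let $u_0(x)=x/(1+x)$ and $u_1(x)=1/(1+x)$, and let $\Phi$ be the free semigroup (under composition) generated by $u_0$ and $u_1$. For $x\in\mathbb{R}$ and $\epsilon>0$ let $\mathcal{U}_\epsilon(x)$ denote the interval centred at $x$ of Euclidean diameter $\epsilon$. Then for each $g\in\Phi$ there exists a function $\Delta:(0,1]\to\mathbb{R}_+$ with $\lim_{s\to0}\Delta(s)=0$ such that for every $h\in\Phi$ and every sufficiently small $\epsilon>0$, \[ \Bigl|\operatorname{diam}\bigl(h(\mathcal{U}_\epsilon(g(1)))\bigr)-\epsilon\,|h'(g(1))|\Bigr| < \epsilon\,|(h\circ g)'(1)|\,\Delta(\epsilon). \]
   Context: $u_0,u_1$ are the inverse branches of the Farey map $T(x)=x/(1-x)$ on $[0,1/2]$, $T(x)=(1-x)/x$ on $(1/2,1]$; they are regarded as maps on a neighbourhood of $[0,1]$ in $(-1,\infty)$. $\operatorname{diam}$ denotes Euclidean diameter. *)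

theory Defs
  imports "HOL-Analysis.Analysis"
begin

definition u0 :: "real \<Rightarrow> real" where "u0 x = x / (1 + x)"
definition u1 :: "real \<Rightarrow> real" where "u1 x = 1 / (1 + x)"

text \<open>A word over {u0,u1} (False = u0, True = u1) denotes the composition
  of the generators, leftmost letter applied last.\<close>
fun word_map :: "bool list \<Rightarrow> real \<Rightarrow> real" where
  "word_map [] = id"
| "word_map (b # w) = (if b then u1 else u0) \<circ> word_map w"

definition Phi :: "(real \<Rightarrow> real) set" where
  "Phi = {word_map w | w. w \<noteq> []}"

definition U :: "real \<Rightarrow> real \<Rightarrow> real set" where
  "U eps x = {x - eps/2 .. x + eps/2}"

end

theory Submission
  imports Defs
begin


lemma word_map_append: "word_map (v @ w) = word_map v \<circ> word_map w"
  by (induction v) auto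

lemma word_map_pos: "x > 0 \<Longrightarrow> word_map w x > 0"
  by (induction w) (auto simp: u0_def u1_def)

lemma word_map_mobius:
  "\<exists>(p::real) (q::real) (r::real) (s::real). p \<ge> 0 \<and> q \<ge> 0 \<and> r \<ge> 0 \<and> s \<ge> 0 \<and> \<bar>p * s - q*r\<bar> = 1 \<and>
     (\<forall>x::real. x > 0 \<longrightarrow> r*x+s > 0 \<and> word_map w x = (p*x+q)/(r*x+s))"
proof (induction w)
  case Nil
  show ?case by (rule exI[of _ 1], rule exI[of _ 0], rule exI[of _ 0], rule exI[of _ 1]) auto
next
  case (Cons b w)
  then obtain p q r s :: real where h: "p \<ge> 0" "q \<ge> 0" "r \<ge> 0" "s \<ge> 0" "\<bar>p * s - q*r\<bar> = 1"
     "\<forall>x::real. x > 0 \<longrightarrow> r*x+s > 0 \<and> word_map w x = (p*x+q)/(r*x+s)" by blast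
  have den: "(p+r)*x + (q+s) > 0" if "x > 0" for x
  proof -
    have "p*x+q \<ge> 0" using h that by simp
    moreover have "r*x+s > 0" using h(6) that by blast
    ultimately show ?thesis by (simp add: algebra_simps)
  qed
  have e0: "u0 ((p*x+q)/(r*x+s)) = (p*x+q)/((p+r)*x+(q+s))" if "x>0" for x
  proof -
    have "r*x+s > 0" using h(6) that by blast
    hence "1 + (p*x+q)/(r*x+s) = ((p+r)*x+(q+s))/(r*x+s)" by (simp add: field_simps)
    thus ?thesis using den[OF that] \<open>r*x+s > 0\<close> by (simp add: u0_def)
  qed
  have e1: "u1 ((p*x+q)/(r*x+s)) = (r*x+s)/((p+r)*x+(q+s))" if "x>0" for x
  proof -
    have "r*x+s > 0" using h(6) that by blast
    hence "1 + (p*x+q)/(r*x+s) = ((p+r)*x+(q+s))/(r*x+s)" by (simp add: field_simps)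
    thus ?thesis using den[OF that] \<open>r*x+s > 0\<close> by (simp add: u1_def)
  qed
  show ?case
  proof (cases b)
    case True
    show ?thesis
      apply (rule exI[of _ r], rule exI[of _ s], rule exI[of _ "p+r"], rule exI[of _ "q+s"])
      using h den e1 True by (auto simp: algebra_simps abs_minus_commute)
  next
    case False
    show ?thesis
      apply (rule exI[of _ p], rule exI[of _ q], rule exI[of _ "p+r"], rule exI[of _ "q+s"])
      using h den e0 False by (auto simp: algebra_simps)
  qed
qed

lemma mob_diff:
  fixes p q r s y z :: real
  assumes "r*y+s > 0" "r*z+s > 0"
  shows "(p*y+q)/(r*y+s) - (p*z+q)/(r*z+s) = (p * s - q*r)*(y-z)/((r*y+s)*(r*z+s))"
  using assms by (simp add: field_simps)

lemma between:
  fixes f :: "real \<Rightarrow> real"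
  assumes D: "\<bar>D\<bar> = 1"
    and df: "\<And>y z. a \<le> y \<Longrightarrow> y \<le> b \<Longrightarrow> a \<le> z \<Longrightarrow> z \<le> b \<Longrightarrow> \<exists>c>0. f y - f z = D*(y-z)*c"
    and "a \<le> y" "y \<le> b" "a \<le> z" "z \<le> b"
  shows "\<bar>f y - f z\<bar> \<le> \<bar>f b - f a\<bar>"
proof -
  have ab: "a \<le> b" using assms by linarith
  have "\<exists>c1>0. f y - f a = D*(y-a)*c1" using df[of y a] assms ab by simp
  then obtain c1 where c1: "c1 > 0" "f y - f a = D*(y-a)*c1" by blast
  have "\<exists>c2>0. f b - f y = D*(b-y)*c2" using df[of b y] assms ab by simp
  then obtain c2 where c2: "c2 > 0" "f b - f y = D*(b-y)*c2" by blast
  have "\<exists>c3>0. f z - f a = D*(z-a)*c3" using df[of z a] assms ab by simp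
  then obtain c3 where c3: "c3 > 0" "f z - f a = D*(z-a)*c3" by blast
  have "\<exists>c4>0. f b - f z = D*(b-z)*c4" using df[of b z] assms ab by simp
  then obtain c4 where c4: "c4 > 0" "f b - f z = D*(b-z)*c4" by blast
  show ?thesis
  proof (cases "D = 1")
    case True
    have "f y - f a \<ge> 0" "f b - f y \<ge> 0" "f z - f a \<ge> 0" "f b - f z \<ge> 0"
      using c1 c2 c3 c4 assms True by simp_all
    thus ?thesis by linarith
  next
    case False
    hence "D = -1" using D by linarith
    hence "f y - f a \<le> 0" "f b - f y \<le> 0" "f z - f a \<le> 0" "f b - f z \<le> 0"
      using c1 c2 c3 c4 assms by (simp_all add: mult_nonpos_nonneg)
    thus ?thesis by linarith
  qed
qed

lemma core:
  fixes f :: "real \<Rightarrow> real" and p q r s x e :: real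
  assumes r: "r \<ge> 0" and s: "s \<ge> 0" and D: "\<bar>p * s - q*r\<bar> = 1"
    and fm: "\<forall>y::real. y > 0 \<longrightarrow> r*y+s > 0 \<and> f y = (p*y+q)/(r*y+s)"
    and x: "x > 0" and e: "e > 0" "e < x"
  shows "\<bar>diameter (f ` {x-e/2..x+e/2}) - e/(r*x+s)^2\<bar> \<le> r^2/(2*(r*x+s)^4) * e^3"
proof -
  define a where "a = x - e/2"
  define b where "b = x + e/2"
  define K where "K y = r*y+s" for y
  have a0: "a > 0" "a \<ge> x/2" using e x unfolding a_def by auto
  have ab: "a \<le> b" using e unfolding a_def b_def by simp
  have Kpos: "K y > 0" if "y > 0" for y using fm that unfolding K_def by blast
  have df: "\<exists>c>0. f y - f z = (p * s - q*r)*(y-z)*c" if "a \<le> y" "y \<le> b" "a \<le> z" "z \<le> b" for y z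
  proof -
    have y0: "y > 0" "z > 0" using that a0 by auto
    have "f y - f z = (p * s - q*r)*(y-z)/(K y * K z)"
      using fm y0 mob_diff[of r y s z p q] unfolding K_def by simp
    moreover have "1/(K y * K z) > 0" using Kpos y0 by simp
    ultimately show ?thesis by (metis times_divide_eq_right mult.right_neutral)
  qed
  have bw: "\<bar>f y - f z\<bar> \<le> \<bar>f b - f a\<bar>" if "y \<in> {a..b}" "z \<in> {a..b}" for y z
    using between[OF D, of a b f, OF df] that by auto
  have diam: "diameter (f ` {a..b}) = \<bar>f b - f a\<bar>"
  proof (rule antisym)
    show "diameter (f ` {a..b}) \<le> \<bar>f b - f a\<bar>"
      by (rule diameter_le) (use bw in auto)
    have "bdd_above (case_prod dist ` (f ` {a..b} \<times> f ` {a..b}))"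
      by (rule bdd_aboveI[of _ "\<bar>f b - f a\<bar>"]) (use bw in \<open>auto simp: dist_real_def\<close>)
    hence "dist (f b) (f a) \<le> diameter (f ` {a..b})"
      by (rule diameter_bounded_bound') (use ab in auto)
    thus "\<bar>f b - f a\<bar> \<le> diameter (f ` {a..b})" by (simp add: dist_real_def)
  qed
  have Ka: "K a \<ge> K x / 2"
  proof -
    have "r * x \<le> r * (2*a)" using a0 r by (intro mult_left_mono) auto
    thus ?thesis using s unfolding K_def by simp
  qed
  have Kb: "K b \<ge> K x" using e r unfolding K_def b_def by (simp add: mult_left_mono)
  have Kx: "K x > 0" using Kpos x by simp
  have Ka0: "K a > 0" using Kpos a0 by simp
  have prod: "K a * K b = (K x)^2 - (r*e/2)^2"
    unfolding K_def a_def b_def by (simp add: algebra_simps power2_eq_square)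
  have fba: "\<bar>f b - f a\<bar> = e/(K a * K b)"
  proof -
    have "f b - f a = (p * s - q*r)*(b-a)/(K b * K a)"
      using fm a0 ab mob_diff[of r b s a p q] unfolding K_def by simp
    moreover have "b - a = e" unfolding a_def b_def by simp
    ultimately show ?thesis using D Ka0 Kx Kb e by (simp add: abs_mult abs_divide mult.commute)
  qed
  have err: "e/(K a * K b) - e/(K x)^2 = e * (r*e/2)^2 / (K a * K b * (K x)^2)"
  proof -
    have P: "K a * K b > 0" using Ka0 Kx Kb by simp
    have Q: "(K x)^2 > 0" using Kx by simp
    have "e/(K a * K b) - e/(K x)^2 = e * ((K x)^2 - K a * K b) / (K a * K b * (K x)^2)"
    proof -
      have g: "e/P' - e/Q' = e*(Q'-P')/(P'*Q')" if "P' \<noteq> 0" "Q' \<noteq> 0" for P' Q' :: real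
        using that by (simp add: field_simps)
      show ?thesis using g[of "K a * K b" "(K x)^2"] P Q Ka0 Kx Kb by simp
    qed
    thus ?thesis using prod by simp
  qed
  have nn: "e * (r*e/2)^2 / (K a * K b * (K x)^2) \<ge> 0" using Ka0 Kx Kb e by simp
  have "K a * K b * (K x)^2 \<ge> (K x/2) * K x * (K x)^2"
    using Ka Kb Kx by (intro mult_right_mono mult_mono) auto
  hence "e * (r*e/2)^2 / (K a * K b * (K x)^2) \<le> e * (r*e/2)^2 / ((K x/2) * K x * (K x)^2)"
    using Kx e Ka0 Kb by (intro divide_left_mono) auto
  also have "\<dots> = r^2/(2*(K x)^4) * e^3"
    using Kx by (simp add: field_simps power2_eq_square power3_eq_cube power4_eq_xxxx)
  finally have "\<bar>e/(K a * K b) - e/(K x)^2\<bar> \<le> r^2/(2*(K x)^4) * e^3" using err nn by simp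
  thus ?thesis using diam fba unfolding a_def b_def K_def by simp
qed


lemma deriv_mob:
  fixes f :: "real \<Rightarrow> real" and p q r s x :: real
  assumes fm: "\<forall>y::real. y > 0 \<longrightarrow> r*y+s > 0 \<and> f y = (p*y+q)/(r*y+s)"
    and x: "x > 0"
  shows "deriv f x = (p * s - q*r)/(r*x+s)^2"
proof -
  have K: "r*x+s \<noteq> 0" using fm x by force
  have "((\<lambda>y. (p*y+q)/(r*y+s)) has_field_derivative (p*(r*x+s) - (p*x+q)*r)/(r*x+s)^2) (at x)"
    using K by (auto intro!: derivative_eq_intros simp: power2_eq_square)
  hence "(f has_field_derivative (p*(r*x+s) - (p*x+q)*r)/(r*x+s)^2) (at x)"
    by (rule has_field_derivative_transform_within_open[where S="{0<..}"]) (use x fm in auto)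
  hence "deriv f x = (p*(r*x+s) - (p*x+q)*r)/(r*x+s)^2" by (rule DERIV_imp_deriv)
  also have "p*(r*x+s) - (p*x+q)*r = p * s - q*r" by (simp add: algebra_simps)
  finally show ?thesis .
qed

theorem lemma2p2:
  "\<forall>g\<in>Phi. \<exists>\<Delta> :: real \<Rightarrow> real.
      (\<forall>s\<in>{0<..1}. \<Delta> s > 0) \<and> (\<Delta> \<longlongrightarrow> 0) (at_right 0) \<and>
      (\<forall>h\<in>Phi. \<forall>\<^sub>F \<epsilon> in at_right 0.
         \<bar>diameter (h ` U \<epsilon> (g 1)) - \<epsilon> * \<bar>deriv h (g 1)\<bar>\<bar>
           < \<epsilon> * \<bar>deriv (h \<circ> g) 1\<bar> * \<Delta> \<epsilon>)"
proof
  fix g assume "g \<in> Phi"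
  then obtain wg where g: "g = word_map wg" unfolding Phi_def by blast
  define x0 where "x0 = g 1"
  have x0: "x0 > 0" unfolding x0_def g by (rule word_map_pos) simp
  show "\<exists>\<Delta> :: real \<Rightarrow> real.
      (\<forall>s\<in>{0<..1}. \<Delta> s > 0) \<and> (\<Delta> \<longlongrightarrow> 0) (at_right 0) \<and>
      (\<forall>h\<in>Phi. \<forall>\<^sub>F \<epsilon> in at_right 0.
         \<bar>diameter (h ` U \<epsilon> (g 1)) - \<epsilon> * \<bar>deriv h (g 1)\<bar>\<bar>
           < \<epsilon> * \<bar>deriv (h \<circ> g) 1\<bar> * \<Delta> \<epsilon>)"
  proof (intro exI[of _ "\<lambda>s. s"] conjI ballI)
    show "\<And>s. s \<in> {0<..1} \<Longrightarrow> (0::real) < s" by simp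
    show "((\<lambda>s. s) \<longlongrightarrow> (0::real)) (at_right 0)"
      by (simp add: tendsto_ident_at)
    fix h assume "h \<in> Phi"
    then obtain wh where h: "h = word_map wh" unfolding Phi_def by blast
    obtain p q r s :: real where hm: "p \<ge> 0" "q \<ge> 0" "r \<ge> 0" "s \<ge> 0" "\<bar>p * s - q*r\<bar> = 1"
      "\<forall>x::real. x > 0 \<longrightarrow> r*x+s > 0 \<and> word_map wh x = (p*x+q)/(r*x+s)"
      using word_map_mobius[of wh] by blast
    obtain P Q R S :: real where gm: "\<bar>P * S - Q*R\<bar> = 1"
      "\<forall>x::real. x > 0 \<longrightarrow> R*x+S > 0 \<and> word_map (wh @ wg) x = (P*x+Q)/(R*x+S)"
      using word_map_mobius[of "wh @ wg"] by blast
    have hg: "h \<circ> g = word_map (wh @ wg)" by (simp add: h g word_map_append)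
    define c where "c = \<bar>deriv (h \<circ> g) 1\<bar>"
    have RS: "R + S > 0" using gm(2)[rule_format, of 1] by simp
    have c: "c = 1/(R+S)^2" unfolding c_def hg
      using deriv_mob[OF gm(2), of 1] gm(1) RS by (simp add: abs_divide)
    have cpos: "c > 0" using c RS by simp
    define K where "K = r*x0+s"
    have Kpos: "K > 0" using hm(6)[rule_format, OF x0] unfolding K_def by simp
    have dh: "\<bar>deriv h x0\<bar> = 1/K^2" unfolding h K_def
      using deriv_mob[OF hm(6) x0] hm(5) by (simp add: abs_divide)
    define C where "C = r^2/(2*K^4)"
    have C0: "C \<ge> 0" unfolding C_def using Kpos by simp
    have ev: "\<forall>\<^sub>F \<epsilon> in at_right 0. \<epsilon> < min x0 (c/(C+1))"
      unfolding eventually_at_right_field using x0 cpos C0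
      by (intro exI[of _ "min x0 (c/(C+1))"]) auto
    show "\<forall>\<^sub>F \<epsilon> in at_right 0.
         \<bar>diameter (h ` U \<epsilon> (g 1)) - \<epsilon> * \<bar>deriv h (g 1)\<bar>\<bar>
           < \<epsilon> * \<bar>deriv (h \<circ> g) 1\<bar> * \<epsilon>"
      using ev eventually_at_right_less[of 0]
    proof eventually_elim
      case (elim e)
      have e1: "e > 0" "e < x0" "e < c/(C+1)" using elim by auto
      have "e * (C+1) < c" using e1(3) C0 by (simp add: less_divide_eq)
      with e1 have e: "e > 0" "e < x0" "e * (C+1) < c" by auto
      have core': "\<bar>diameter (h ` {x0-e/2..x0+e/2}) - e/K^2\<bar> \<le> C * e^3"
        using core[of r s p q h x0 e] hm e x0 unfolding h C_def K_def by simp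
      have "C * e^3 = e * e * (C * e)" by (simp add: power3_eq_cube)
      also have "\<dots> < e * e * c"
      proof -
        have "C * e \<le> (C+1) * e" using e by simp
        moreover have "(C+1) * e = e * (C+1)" by simp
        ultimately have "C * e < c" using e by linarith
        thus ?thesis using e by simp
      qed
      finally show ?case using core' dh e unfolding U_def x0_def[symmetric] c_def[symmetric]
        by (simp add: mult.commute mult.left_commute)
    qed
  qed
qed

end
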